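(* Let $\kappa$ be an infinite cardinal and let $\langle\kappa\times\kappa^{++},\unlhd\rangle$ be a $(\kappa,\kappa^{++})$-admissible poset. For $(\alpha,\beta)\in\kappa\times\kappa^{++}$ put $C(\alpha,\beta)=\{(\gamma,\delta)\in\kappa\times\kappa^{++}:(\gamma,\delta)\unlhd(\alpha,\beta)\}$, and give $X=\kappa\times\kappa^{++}$ the topology generated by the subbase consisting of all sets $C(\alpha,\beta)$ and their complements $X\setminus C(\alpha,\beta)$. Then $X$ is Hausdorff, every $C(\alpha,\beta)$ is compact (so $X$ is a locally compact Hausdorff space), and $I_\beta(X)=\kappa\times\{\beta\}$ for every $\beta<\kappa^{++}$. In particular $X$ is a locally compact Hausdorff scattered space of height $\kappa^{++}$ whose cardinal sequence is constantly $\kappa$.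
   Context: $(\kappa,\kappa^{++})$-admissible: $\unlhd$ is a reflexive, transitive, antisymmetric relation on $\kappa\times\kappa^{++}$ such that (A) $(\alpha,\beta)\unlhd(\alpha',\beta')$ with $(\alpha,\beta)\neq(\alpha',\beta')$ implies $\beta<\beta'$; (B) for every $\beta<\kappa^{++}$ and $(\alpha',\beta')$ with $\beta<\beta'$ there are infinitely many $\alpha$ with $(\alpha,\beta)\unlhd(\alpha',\beta')$; (C) for any two points $x_0,x_1$ there is a finite set $b$ of points each $\unlhd$-below both $x_0,x_1$ such that every point $\unlhd$-below both $x_0,x_1$ is $\unlhd$-below some element of $b$. Cantor–Bendixson levels: $I_0(X)$ is the set of isolated points of $X$, and $I_\beta(X)$ is the set of isolated points of the subspace $X\setminus\bigcup_{\alpha<\beta}I_\alpha(X)$. $X$ is scattered if $X=\bigcup_{\beta<\lambda}I_\beta(X)$ where $\lambda$ is the least ordinal with $I_\lambda(X)=\emptyset$ (the height); the cardinal sequence is $\langle|I_\beta(X)|:\beta<\lambda\rangle$. *)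

theory Defs
  imports "HOL-Analysis.Analysis"
begin

text \<open>Points of \<kappa> \<times> kappa^{++} are pairs (\<alpha>,\<beta>) with \<alpha> \<in> K (a set of size \<kappa>) and
  \<beta> \<in> Field L, where L is a well-order of order type kappa^{++} (strict order: (\<beta>,\<beta>') \<in> L, \<beta> \<noteq> \<beta>').\<close>

definition strictL :: "'b rel \<Rightarrow> 'b \<Rightarrow> 'b \<Rightarrow> bool" where
  "strictL L \<beta> \<beta>' \<longleftrightarrow> (\<beta>, \<beta>') \<in> L \<and> \<beta> \<noteq> \<beta>'"

definition admissible ::
  "'a set \<Rightarrow> 'b rel \<Rightarrow> (('a \<times> 'b) \<Rightarrow> ('a \<times> 'b) \<Rightarrow> bool) \<Rightarrow> bool" where
  "admissible K L le \<longleftrightarrow>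
     (\<forall>x y. le x y \<longrightarrow> x \<in> K \<times> Field L \<and> y \<in> K \<times> Field L) \<and>
     (\<forall>x \<in> K \<times> Field L. le x x) \<and>
     (\<forall>x y z. le x y \<longrightarrow> le y z \<longrightarrow> le x z) \<and>
     (\<forall>x y. le x y \<longrightarrow> le y x \<longrightarrow> x = y) \<and>
     (\<forall>x y. le x y \<longrightarrow> x \<noteq> y \<longrightarrow> strictL L (snd x) (snd y)) \<and>
     (\<forall>\<beta> \<in> Field L. \<forall>\<alpha>' \<in> K. \<forall>\<beta>' \<in> Field L. strictL L \<beta> \<beta>' \<longrightarrow>
        infinite {\<alpha> \<in> K. le (\<alpha>, \<beta>) (\<alpha>', \<beta>')}) \<and>
     (\<forall>x0 \<in> K \<times> Field L. \<forall>x1 \<in> K \<times> Field L. \<exists>b. finite b \<and> b \<subseteq> K \<times> Field L \<and>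
        (\<forall>y \<in> b. le y x0 \<and> le y x1) \<and>
        (\<forall>z \<in> K \<times> Field L. le z x0 \<and> le z x1 \<longrightarrow> (\<exists>y \<in> b. le z y)))"

definition Cone :: "'a set \<Rightarrow> 'b rel \<Rightarrow> (('a \<times> 'b) \<Rightarrow> ('a \<times> 'b) \<Rightarrow> bool) \<Rightarrow> 'a \<times> 'b \<Rightarrow> ('a \<times> 'b) set" where
  "Cone K L le x = {y \<in> K \<times> Field L. le y x}"

definition admTop :: "'a set \<Rightarrow> 'b rel \<Rightarrow> (('a \<times> 'b) \<Rightarrow> ('a \<times> 'b) \<Rightarrow> bool) \<Rightarrow> ('a \<times> 'b) topology" where
  "admTop K L le = topology_generated_by
     ((\<lambda>x. Cone K L le x) ` (K \<times> Field L) \<union> (\<lambda>x. (K \<times> Field L) - Cone K L le x) ` (K \<times> Field L))"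

definition isolated_pts :: "'x topology \<Rightarrow> 'x set \<Rightarrow> 'x set" where
  "isolated_pts T Y = {x \<in> Y. \<exists>U. openin T U \<and> U \<inter> Y = {x}}"

text \<open>Cantor--Bendixson levels I_\<beta>(T), indexed by the well-order L, defined by
  well-founded recursion along the strict part of L:
  I_\<beta> = isolated points of topspace T - \<Union>_{\<alpha> <_L \<beta>} I_\<alpha>.\<close>
definition CB_level :: "'x topology \<Rightarrow> 'b rel \<Rightarrow> 'b \<Rightarrow> 'x set" where
  "CB_level T L = wfrec (L - Id)
     (\<lambda>f \<beta>. isolated_pts T (topspace T - \<Union> (f ` underS L \<beta>)))"

end

theory Submission
  imports Defs
begin

lemma cover_aux: "A \<subseteq> \<Union>F \<Longrightarrow> D - A \<subseteq> V \<Longrightarrow> D \<subseteq> \<Union>(insert V F)"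
  by blast

locale admloc =
  fixes K :: "'a set" and L :: "'b rel"
    and le :: "('a \<times> 'b) \<Rightarrow> ('a \<times> 'b) \<Rightarrow> bool"
  assumes WO: "Well_order L"
    and adm: "admissible K L le"
begin

abbreviation "X \<equiv> K \<times> Field L"
abbreviation "C \<equiv> Cone K L le"
abbreviation "SB \<equiv> (\<lambda>x. C x) ` X \<union> (\<lambda>x. X - C x) ` X"
abbreviation "T \<equiv> admTop K L le"

lemma A: "(\<forall>x y. le x y \<longrightarrow> x \<in> K \<times> Field L \<and> y \<in> K \<times> Field L) \<and>
     (\<forall>x \<in> K \<times> Field L. le x x) \<and>
     (\<forall>x y z. le x y \<longrightarrow> le y z \<longrightarrow> le x z) \<and>
     (\<forall>x y. le x y \<longrightarrow> le y x \<longrightarrow> x = y) \<and>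
     (\<forall>x y. le x y \<longrightarrow> x \<noteq> y \<longrightarrow> strictL L (snd x) (snd y)) \<and>
     (\<forall>\<beta> \<in> Field L. \<forall>\<alpha>' \<in> K. \<forall>\<beta>' \<in> Field L. strictL L \<beta> \<beta>' \<longrightarrow>
        infinite {\<alpha> \<in> K. le (\<alpha>, \<beta>) (\<alpha>', \<beta>')}) \<and>
     (\<forall>x0 \<in> K \<times> Field L. \<forall>x1 \<in> K \<times> Field L. \<exists>b. finite b \<and> b \<subseteq> K \<times> Field L \<and>
        (\<forall>y \<in> b. le y x0 \<and> le y x1) \<and>
        (\<forall>z \<in> K \<times> Field L. le z x0 \<and> le z x1 \<longrightarrow> (\<exists>y \<in> b. le z y)))"
  using adm unfolding admissible_def .

lemma le_X: "le x y \<Longrightarrow> x \<in> X \<and> y \<in> X"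
  using A by (elim conjE) (erule allE[of _ x], erule allE[of _ y], erule mp)
lemma le_refl: "x \<in> X \<Longrightarrow> le x x"
  using A by (elim conjE) (erule bspec)
lemma le_trans: "le x y \<Longrightarrow> le y z \<Longrightarrow> le x z"
proof -
  have "\<forall>x y z. le x y \<longrightarrow> le y z \<longrightarrow> le x z" using A by (elim conjE)
  then show "le x y \<Longrightarrow> le y z \<Longrightarrow> le x z" by blast
qed
lemma le_antisym: "le x y \<Longrightarrow> le y x \<Longrightarrow> x = y"
proof -
  have "\<forall>x y. le x y \<longrightarrow> le y x \<longrightarrow> x = y" using A by (elim conjE)
  then show "le x y \<Longrightarrow> le y x \<Longrightarrow> x = y" by blast
qed
lemma le_level: "le x y \<Longrightarrow> x \<noteq> y \<Longrightarrow> (snd x, snd y) \<in> L \<and> snd x \<noteq> snd y"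
proof -
  have "\<forall>x y. le x y \<longrightarrow> x \<noteq> y \<longrightarrow> strictL L (snd x) (snd y)" using A by (elim conjE)
  then show "le x y \<Longrightarrow> x \<noteq> y \<Longrightarrow> (snd x, snd y) \<in> L \<and> snd x \<noteq> snd y"
    unfolding strictL_def by blast
qed
lemma le_inf: "\<beta> \<in> Field L \<Longrightarrow> \<alpha>' \<in> K \<Longrightarrow> \<beta>' \<in> Field L \<Longrightarrow> (\<beta>, \<beta>') \<in> L \<Longrightarrow> \<beta> \<noteq> \<beta>'
   \<Longrightarrow> infinite {\<alpha> \<in> K. le (\<alpha>, \<beta>) (\<alpha>', \<beta>')}"
proof -
  have "\<forall>\<beta> \<in> Field L. \<forall>\<alpha>' \<in> K. \<forall>\<beta>' \<in> Field L. strictL L \<beta> \<beta>' \<longrightarrow>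
        infinite {\<alpha> \<in> K. le (\<alpha>, \<beta>) (\<alpha>', \<beta>')}" using A by (elim conjE)
  then show "\<beta> \<in> Field L \<Longrightarrow> \<alpha>' \<in> K \<Longrightarrow> \<beta>' \<in> Field L \<Longrightarrow> (\<beta>, \<beta>') \<in> L \<Longrightarrow> \<beta> \<noteq> \<beta>'
   \<Longrightarrow> infinite {\<alpha> \<in> K. le (\<alpha>, \<beta>) (\<alpha>', \<beta>')}" unfolding strictL_def by blast
qed
lemma le_C: "x0 \<in> X \<Longrightarrow> x1 \<in> X \<Longrightarrow> \<exists>b. finite b \<and> b \<subseteq> X \<and>
        (\<forall>y \<in> b. le y x0 \<and> le y x1) \<and>
        (\<forall>z \<in> X. le z x0 \<and> le z x1 \<longrightarrow> (\<exists>y \<in> b. le z y))"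
proof -
  have "\<forall>x0 \<in> K \<times> Field L. \<forall>x1 \<in> K \<times> Field L. \<exists>b. finite b \<and> b \<subseteq> K \<times> Field L \<and>
        (\<forall>y \<in> b. le y x0 \<and> le y x1) \<and>
        (\<forall>z \<in> K \<times> Field L. le z x0 \<and> le z x1 \<longrightarrow> (\<exists>y \<in> b. le z y))" using A by (elim conjE)
  then show "x0 \<in> X \<Longrightarrow> x1 \<in> X \<Longrightarrow> ?thesis" by (elim ballE) auto
qed

lemma L_lin: "Linear_order L" using WO by (simp add: well_order_on_def)
lemma L_po: "Partial_order L" using L_lin by (simp add: linear_order_on_def)
lemma L_pre: "Preorder L" using L_po by (simp add: partial_order_on_def)
lemma L_tot: "total_on (Field L) L" using L_lin by (simp add: linear_order_on_def)
lemma L_total: "a \<in> Field L \<Longrightarrow> b \<in> Field L \<Longrightarrow> (a, b) \<in> L \<or> (b, a) \<in> L"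
proof -
  assume a: "a \<in> Field L" and b: "b \<in> Field L"
  have r: "refl_on (Field L) L" using L_pre by (simp add: preorder_on_def)
  show ?thesis
  proof (cases "a = b")
    case True then show ?thesis using r a by (simp add: refl_onD)
  next
    case False then show ?thesis using L_tot a b by (simp add: total_on_def)
  qed
qed
lemma L_antisym: "(a, b) \<in> L \<Longrightarrow> (b, a) \<in> L \<Longrightarrow> a = b"
proof -
  have "antisym L" using L_po by (simp add: partial_order_on_def)
  then show "(a, b) \<in> L \<Longrightarrow> (b, a) \<in> L \<Longrightarrow> a = b" by (rule antisymD)
qed
lemma L_trans: "(a, b) \<in> L \<Longrightarrow> (b, c) \<in> L \<Longrightarrow> (a, c) \<in> L"
proof -
  have "trans L" using L_pre by (simp add: preorder_on_def)
  then show "(a, b) \<in> L \<Longrightarrow> (b, c) \<in> L \<Longrightarrow> (a, c) \<in> L" by (rule transD)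
qed
lemma L_refl: "a \<in> Field L \<Longrightarrow> (a, a) \<in> L"
proof -
  have "refl_on (Field L) L" using L_pre by (simp add: preorder_on_def)
  then show "a \<in> Field L \<Longrightarrow> (a, a) \<in> L" by (rule refl_onD)
qed
lemma L_wf: "wf (L - Id)" using WO by (simp add: wo_rel.WF wo_rel_def)

lemma C_sub: "C x \<subseteq> X" unfolding Cone_def by auto
lemma C_mem: "x \<in> X \<Longrightarrow> x \<in> C x" unfolding Cone_def using le_refl by auto

lemma topspace_T: "topspace T = X"
  unfolding admTop_def using C_sub C_mem by auto

lemma openin_T: "openin T U \<longleftrightarrow> generate_topology_on SB U"
  unfolding admTop_def by (rule openin_topology_generated_by_iff)

lemma nbhd:
  assumes "generate_topology_on SB U" "x \<in> U"
  shows "\<exists>B. finite B \<and> (\<forall>b\<in>B. le b x \<and> b \<noteq> x) \<and> C x - \<Union>(C ` B) \<subseteq> U"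
  using assms
proof (induction arbitrary: x rule: generate_topology_on.induct)
  case Empty then show ?case by simp
next
  case (Int a b)
  have xa: "x \<in> a" and xb: "x \<in> b" using Int.prems by simp_all
  obtain B1 where B1: "finite B1" "\<forall>b\<in>B1. le b x \<and> b \<noteq> x" "C x - \<Union>(C ` B1) \<subseteq> a"
    using Int.IH(1)[OF xa] by blast
  obtain B2 where B2: "finite B2" "\<forall>b\<in>B2. le b x \<and> b \<noteq> x" "C x - \<Union>(C ` B2) \<subseteq> b"
    using Int.IH(2)[OF xb] by blast
  have "C x - \<Union>(C ` (B1 \<union> B2)) \<subseteq> a \<inter> b" using B1(3) B2(3) by blast
  moreover have "finite (B1 \<union> B2)" using B1(1) B2(1) by simp
  moreover have "\<forall>c\<in>B1 \<union> B2. le c x \<and> c \<noteq> x" using B1(2) B2(2) by blast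
  ultimately show ?case by blast
next
  case (UN Ks)
  obtain k where k: "k \<in> Ks" "x \<in> k" using UN.prems by blast
  obtain B where B: "finite B" "\<forall>b\<in>B. le b x \<and> b \<noteq> x" "C x - \<Union>(C ` B) \<subseteq> k"
    using UN.IH[OF k] by blast
  have "C x - \<Union>(C ` B) \<subseteq> \<Union>Ks" using B(3) k(1) by blast
  then show ?case using B(1,2) by blast
next
  case (Basis s)
  have "s \<in> SB" by fact
  then consider y where "y \<in> X" "s = C y" | y where "y \<in> X" "s = X - C y" by blast
  then show ?case
  proof cases
    case 1
    have "x \<in> C y" using Basis.prems 1(2) by simp
    then have "le x y" unfolding Cone_def by simp
    have "C x \<subseteq> s"
    proof
      fix z assume "z \<in> C x"
      then have "z \<in> X" "le z x" unfolding Cone_def by simp_all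
      then show "z \<in> s" using le_trans[OF _ \<open>le x y\<close>] 1(2) unfolding Cone_def by simp
    qed
    then show ?thesis by (intro exI[of _ "{}"]) simp
  next
    case 2
    have xs: "x \<in> X - C y" using Basis.prems 2(2) by simp
    then have xX: "x \<in> X" by simp
    have nle: "\<not> le x y" using xs unfolding Cone_def by simp
    obtain b where b: "finite b" "b \<subseteq> X" "\<forall>y' \<in> b. le y' x \<and> le y' y"
      "\<forall>z \<in> X. le z x \<and> le z y \<longrightarrow> (\<exists>y' \<in> b. le z y')" using le_C[OF xX 2(1)] by blast
    have "\<forall>c\<in>b. le c x \<and> c \<noteq> x"
    proof
      fix c assume "c \<in> b"
      then have "le c x" "le c y" using b(3) by simp_all
      then show "le c x \<and> c \<noteq> x" using nle by metis
    qed
    moreover have "C x - \<Union>(C ` b) \<subseteq> s"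
    proof
      fix z assume z: "z \<in> C x - \<Union>(C ` b)"
      then have zX: "z \<in> X" and zx: "le z x" unfolding Cone_def by simp_all
      show "z \<in> s"
      proof (rule ccontr)
        assume "z \<notin> s"
        then have "z \<in> C y" using 2(2) zX by simp
        then have "le z y" unfolding Cone_def by simp
        then obtain y' where y': "y' \<in> b" "le z y'" using b(4) zX zx by blast
        then have "z \<in> C y'" using zX unfolding Cone_def by simp
        then show False using z y'(1) by blast
      qed
    qed
    ultimately show ?thesis using b(1) by blast
  qed
qed

lemma nbhd_open:
  assumes "openin T U" "x \<in> U"
  shows "\<exists>B. finite B \<and> (\<forall>b\<in>B. le b x \<and> b \<noteq> x) \<and> C x - \<Union>(C ` B) \<subseteq> U"
  using nbhd assms openin_T by blast

lemma C_open: "x \<in> X \<Longrightarrow> openin T (C x)"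
  unfolding openin_T by (rule generate_topology_on.Basis) auto
lemma Ccomp_open: "x \<in> X \<Longrightarrow> openin T (X - C x)"
  unfolding openin_T by (rule generate_topology_on.Basis) auto

lemma hausdorff: "Hausdorff_space T"
  unfolding Hausdorff_space_def topspace_T
proof (intro allI impI, elim conjE)
  fix x y assume xy: "x \<in> X" "y \<in> X" "x \<noteq> y"
  show "\<exists>U V. openin T U \<and> openin T V \<and> x \<in> U \<and> y \<in> V \<and> disjnt U V"
  proof (cases "le y x")
    case False
    then show ?thesis using xy C_open Ccomp_open C_mem
      by (intro exI[of _ "C x"] exI[of _ "X - C x"]) (auto simp: disjnt_def Cone_def)
  next
    case True
    then have "\<not> le x y" using le_antisym xy by blast
    then show ?thesis using xy C_open Ccomp_open C_mem
      by (intro exI[of _ "X - C y"] exI[of _ "C y"]) (auto simp: disjnt_def Cone_def)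
  qed
qed

lemma compact_C: "x \<in> X \<Longrightarrow> compactin T (C x)"
proof (induction x rule: wf_induct_rule[OF wf_inv_image[OF L_wf, of snd]])
  case (1 x)
  show ?case unfolding compactin_def topspace_T
  proof (intro conjI C_sub allI impI)
    fix \<U> assume U: "(\<forall>U\<in>\<U>. openin T U) \<and> C x \<subseteq> \<Union>\<U>"
    have Uo: "\<forall>U\<in>\<U>. openin T U" and Uc: "C x \<subseteq> \<Union>\<U>" using U by simp_all
    have "x \<in> \<Union>\<U>" using Uc C_mem[OF 1(2)] by (rule subsetD)
    then obtain V where V: "V \<in> \<U>" "x \<in> V" by (rule UnionE)
    have "openin T V" using Uo V(1) by simp
    obtain B where B0: "finite B \<and> (\<forall>b\<in>B. le b x \<and> b \<noteq> x) \<and> C x - \<Union>(C ` B) \<subseteq> V"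
      using nbhd_open[OF \<open>openin T V\<close> V(2)] by (rule exE)
    have B: "finite B" "\<forall>b\<in>B. le b x \<and> b \<noteq> x" "C x - \<Union>(C ` B) \<subseteq> V"
      using B0 by simp_all
    have cB: "compactin T (\<Union>(C ` B))"
    proof (rule compactin_Union)
      show "finite (C ` B)" using B(1) by simp
      fix S assume "S \<in> C ` B"
      then obtain b where b: "b \<in> B" "S = C b" by (rule imageE) simp
      then have "le b x" "b \<noteq> x" using B(2) by simp_all
      then have "(b, x) \<in> inv_image (L - Id) snd" "b \<in> X" using le_level[of b x] le_X[of b x] by auto
      then have "compactin T (C b)" using 1(1) by simp
      then show "compactin T S" using b(2) by simp
    qed
    have sub: "\<Union>(C ` B) \<subseteq> \<Union>\<U>"
    proof -
      have "\<Union>(C ` B) \<subseteq> C x"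
      proof
        fix z assume "z \<in> \<Union>(C ` B)"
        then obtain b where "b \<in> B" "z \<in> C b" by blast
        then have "le z b" "le b x" "z \<in> X" using B(2) unfolding Cone_def by simp_all
        then show "z \<in> C x" using le_trans unfolding Cone_def by blast
      qed
      then show ?thesis using Uc by (rule subset_trans)
    qed
    have "\<forall>\<U>. (\<forall>U\<in>\<U>. openin T U) \<and> \<Union>(C ` B) \<subseteq> \<Union>\<U> \<longrightarrow>
        (\<exists>\<F>. finite \<F> \<and> \<F> \<subseteq> \<U> \<and> \<Union>(C ` B) \<subseteq> \<Union>\<F>)"
      using cB unfolding compactin_def by (rule conjunct2)
    then have "(\<forall>U\<in>\<U>. openin T U) \<and> \<Union>(C ` B) \<subseteq> \<Union>\<U> \<longrightarrow>
        (\<exists>\<F>. finite \<F> \<and> \<F> \<subseteq> \<U> \<and> \<Union>(C ` B) \<subseteq> \<Union>\<F>)" by (rule spec)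
    then have "\<exists>\<F>. finite \<F> \<and> \<F> \<subseteq> \<U> \<and> \<Union>(C ` B) \<subseteq> \<Union>\<F>"
      using Uo sub by simp
    then obtain F where F0: "finite F \<and> F \<subseteq> \<U> \<and> \<Union>(C ` B) \<subseteq> \<Union>F" by (rule exE)
    then have F: "finite F" "F \<subseteq> \<U>" "\<Union>(C ` B) \<subseteq> \<Union>F" by simp_all
    have "C x \<subseteq> \<Union>(insert V F)" by (rule cover_aux[OF F(3) B(3)])
    moreover have "finite (insert V F)" using F(1) by simp
    moreover have "insert V F \<subseteq> \<U>" using F(2) V(1) by simp
    ultimately show "\<exists>\<F>. finite \<F> \<and> \<F> \<subseteq> \<U> \<and> C x \<subseteq> \<Union>\<F>" by blast
  qed
qed

lemma CB_unfold: "CB_level T L \<beta> = isolated_pts T (topspace T - \<Union> (CB_level T L ` underS L \<beta>))"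
proof -
  have "CB_level T L \<beta> = isolated_pts T (topspace T - \<Union> (cut (CB_level T L) (L - Id) \<beta> ` underS L \<beta>))"
    unfolding CB_level_def by (subst wfrec[OF L_wf]) simp
  moreover have "cut (CB_level T L) (L - Id) \<beta> ` underS L \<beta> = CB_level T L ` underS L \<beta>"
    by (rule image_cong) (auto simp: cut_apply underS_def)
  ultimately show ?thesis by simp
qed

lemma L_max: "finite D \<Longrightarrow> D \<noteq> {} \<Longrightarrow> D \<subseteq> Field L \<Longrightarrow> \<exists>\<delta>\<in>D. \<forall>\<gamma>\<in>D. (\<gamma>, \<delta>) \<in> L"
proof (induction D rule: finite_ne_induct)
  case (singleton x) then show ?case using L_refl by auto
next
  case (insert x F)
  then obtain d where d: "d \<in> F" "\<forall>\<gamma>\<in>F. (\<gamma>, d) \<in> L" by auto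
  show ?case
  proof (cases "(x, d) \<in> L")
    case True then show ?thesis using d by auto
  next
    case False
    then have "(d, x) \<in> L" using L_total insert d by blast
    then show ?thesis using d L_trans L_refl insert by blast
  qed
qed

lemma CB_levels: "\<beta> \<in> Field L \<Longrightarrow> CB_level T L \<beta> = K \<times> {\<beta>}"
proof (induction \<beta> rule: wf_induct_rule[OF L_wf])
  case (1 \<beta>)
  define Y where "Y = topspace T - \<Union> (CB_level T L ` underS L \<beta>)"
  have IH: "\<And>\<gamma>. \<gamma> \<in> underS L \<beta> \<Longrightarrow> CB_level T L \<gamma> = K \<times> {\<gamma>}"
    using 1(1) by (auto simp: underS_def FieldI1)
  have Y: "z \<in> Y \<longleftrightarrow> z \<in> X \<and> (\<beta>, snd z) \<in> L" for z
  proof -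
    have "\<Union> (CB_level T L ` underS L \<beta>) = K \<times> underS L \<beta>" using IH by auto
    then have "z \<in> Y \<longleftrightarrow> z \<in> X \<and> snd z \<notin> underS L \<beta>"
      unfolding Y_def topspace_T by (cases z) auto
    also have "\<dots> \<longleftrightarrow> z \<in> X \<and> (\<beta>, snd z) \<in> L"
      using L_total[of \<beta> "snd z"] L_antisym[of \<beta> "snd z"] 1(2) L_refl[of \<beta>]
      by (cases z) (auto simp: underS_def)
    finally show ?thesis .
  qed
  have "isolated_pts T Y = K \<times> {\<beta>}"
  proof
    show "K \<times> {\<beta>} \<subseteq> isolated_pts T Y"
    proof
      fix x assume x: "x \<in> K \<times> {\<beta>}"
      then have xX: "x \<in> X" using 1(2) by auto
      have xY: "x \<in> Y" using Y x xX L_refl 1(2) by auto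
      have "C x \<inter> Y = {x}"
      proof
        show "{x} \<subseteq> C x \<inter> Y" using C_mem xX xY by auto
        show "C x \<inter> Y \<subseteq> {x}"
        proof
          fix z assume z: "z \<in> C x \<inter> Y"
          show "z \<in> {x}"
          proof (rule ccontr)
            assume "z \<notin> {x}"
            then have "(snd z, \<beta>) \<in> L" "snd z \<noteq> \<beta>" using le_level[of z x] z x unfolding Cone_def by auto
            moreover have "(\<beta>, snd z) \<in> L" using z Y by auto
            ultimately show False using L_antisym by blast
          qed
        qed
      qed
      then show "x \<in> isolated_pts T Y" unfolding isolated_pts_def using xY C_open[OF xX] by blast
    qed
  next
    show "isolated_pts T Y \<subseteq> K \<times> {\<beta>}"
    proof
      fix x assume "x \<in> isolated_pts T Y"
      then obtain U where xY: "x \<in> Y" and U: "openin T U" "U \<inter> Y = {x}"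
        unfolding isolated_pts_def by blast
      obtain a b' where xab: "x = (a, b')" by (cases x)
      have xX: "x \<in> X" and bb: "(\<beta>, b') \<in> L" using xY Y xab by auto
      show "x \<in> K \<times> {\<beta>}"
      proof (rule ccontr)
        assume "x \<notin> K \<times> {\<beta>}"
        then have ne: "b' \<noteq> \<beta>" using xX xab by auto
        have xU: "x \<in> U" using U by auto
        obtain B where B: "finite B" "\<forall>b\<in>B. le b x \<and> b \<noteq> x" "C x - \<Union>(C ` B) \<subseteq> U"
          using nbhd_open[OF U(1) xU] by blast
        define D where "D = insert \<beta> (snd ` B)"
        have "snd ` B \<subseteq> Field L"
        proof
          fix g assume "g \<in> snd ` B"
          then obtain c where c: "c \<in> B" "g = snd c" by (rule imageE) simp
          then have "le c x" using B(2) by simp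
          then have "c \<in> X" using le_X by simp
          then show "g \<in> Field L" using c(2) by (cases c) simp
        qed
        then have DF: "D \<subseteq> Field L" using 1(2) unfolding D_def by simp
        obtain \<delta> where \<delta>: "\<delta> \<in> D" "\<forall>\<gamma>\<in>D. (\<gamma>, \<delta>) \<in> L"
          using L_max[of D] B(1) DF unfolding D_def by auto
        have Dlt: "\<gamma> \<in> D \<Longrightarrow> (\<gamma>, b') \<in> L \<and> \<gamma> \<noteq> b'" for \<gamma>
          using B(2) le_level[of _ x] bb ne xab unfolding D_def by auto
        have \<delta>F: "\<delta> \<in> Field L" using \<delta>(1) DF by auto
        have aK: "a \<in> K" and b'F: "b' \<in> Field L" using xX xab by auto
        have inf: "infinite {\<alpha> \<in> K. le (\<alpha>, \<delta>) (a, b')}"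
          using le_inf[OF \<delta>F aK b'F] Dlt[OF \<delta>(1)] by auto
        have "{\<alpha> \<in> K. le (\<alpha>, \<delta>) (a, b')} \<subseteq> fst ` B \<union> {\<alpha>. (\<alpha>, \<delta>) \<in> C x - \<Union>(C ` B)}"
        proof
          fix \<alpha> assume \<alpha>: "\<alpha> \<in> {\<alpha> \<in> K. le (\<alpha>, \<delta>) (a, b')}"
          show "\<alpha> \<in> fst ` B \<union> {\<alpha>. (\<alpha>, \<delta>) \<in> C x - \<Union>(C ` B)}"
          proof (cases "\<exists>c\<in>B. (\<alpha>, \<delta>) \<in> C c")
            case True
            then obtain c where c: "c \<in> B" "le (\<alpha>, \<delta>) c" unfolding Cone_def by auto
            have "(\<alpha>, \<delta>) = c"
            proof (rule ccontr)
              assume "(\<alpha>, \<delta>) \<noteq> c"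
              then have "(\<delta>, snd c) \<in> L" "\<delta> \<noteq> snd c" using le_level[OF c(2)] by auto
              moreover have "(snd c, \<delta>) \<in> L" using \<delta>(2) c(1) unfolding D_def by auto
              ultimately show False using L_antisym by blast
            qed
            then show ?thesis using c by force
          next
            case False
            then show ?thesis using \<alpha> xab le_X unfolding Cone_def by auto
          qed
        qed
        then have "infinite {\<alpha>. (\<alpha>, \<delta>) \<in> C x - \<Union>(C ` B)}"
        proof -
          assume sub: "{\<alpha> \<in> K. le (\<alpha>, \<delta>) (a, b')} \<subseteq> fst ` B \<union> {\<alpha>. (\<alpha>, \<delta>) \<in> C x - \<Union>(C ` B)}"
          show ?thesis
          proof
            assume "finite {\<alpha>. (\<alpha>, \<delta>) \<in> C x - \<Union>(C ` B)}"
            then have "finite (fst ` B \<union> {\<alpha>. (\<alpha>, \<delta>) \<in> C x - \<Union>(C ` B)})" using B(1) by simp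
            then show False using inf sub finite_subset by blast
          qed
        qed
        then obtain \<alpha> where \<alpha>: "(\<alpha>, \<delta>) \<in> C x - \<Union>(C ` B)"
          using not_finite_existsD by blast
        have "(\<alpha>, \<delta>) \<in> X" using \<alpha> C_sub by blast
        moreover have "(\<beta>, \<delta>) \<in> L" using \<delta>(2) unfolding D_def by simp
        ultimately have "(\<alpha>, \<delta>) \<in> Y" using Y by simp
        moreover have "(\<alpha>, \<delta>) \<in> U" using \<alpha> B(3) by auto
        moreover have "(\<alpha>, \<delta>) \<noteq> x" using Dlt[OF \<delta>(1)] xab by auto
        ultimately show False using U(2) by blast
      qed
    qed
  qed
  moreover have "CB_level T L \<beta> = isolated_pts T Y" unfolding Y_def by (rule CB_unfold)
  ultimately show ?case by (rule trans[rotated])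
qed

end

theorem mainTheorem2:
  fixes K :: "'a set" and L :: "'b rel"
    and le :: "('a \<times> 'b) \<Rightarrow> ('a \<times> 'b) \<Rightarrow> bool"
  assumes "infinite K"
    and "Card_order L"
    and "(L, cardSuc (cardSuc (card_of K))) \<in> ordIso"
    and "admissible K L le"
  shows "Hausdorff_space (admTop K L le)
    \<and> (\<forall>x \<in> K \<times> Field L. compactin (admTop K L le) (Cone K L le x))
    \<and> (\<forall>\<beta> \<in> Field L. CB_level (admTop K L le) L \<beta> = K \<times> {\<beta>})
    \<and> topspace (admTop K L le) = (\<Union>\<beta> \<in> Field L. CB_level (admTop K L le) L \<beta>)"
proof -
  interpret admloc K L le
    using assms(2,4) by unfold_locales (auto intro: card_order_on_well_order_on)
  have 3: "\<forall>\<beta> \<in> Field L. CB_level (admTop K L le) L \<beta> = K \<times> {\<beta>}"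
    using CB_levels by blast
  have "(\<Union>\<beta> \<in> Field L. CB_level (admTop K L le) L \<beta>) = (\<Union>\<beta> \<in> Field L. K \<times> {\<beta>})"
    by (rule SUP_cong) (simp_all add: CB_levels)
  also have "\<dots> = K \<times> Field L" by blast
  finally have 4: "topspace (admTop K L le) = (\<Union>\<beta> \<in> Field L. CB_level (admTop K L le) L \<beta>)"
    using topspace_T by simp
  show ?thesis using hausdorff compact_C 3 4 by blast
qed

end
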